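(* Let $(\mathfrak{X},\pi)$, $a$, $s$, $S$, $m$ and $\kappa$ be as in the context and assume (A), (B) and (C). Then \[ |m_x(z)|\sim 1\qquad\text{for all }x\in\mathfrak{X},\ z\in\mathbb{H},\ |z|\le 2\kappa, \] and \[ \operatorname{Im}m_x(z)\sim\operatorname{Im}m_y(z)\qquad\text{for all }x,y\in\mathfrak{X},\ z\in\mathbb{H},\ |z|\le2\kappa . \]
   Context: Let $(\mathfrak{X},\pi)$ be a measure space where $\pi$ is a probability measure; $\mathcal{B}(\mathfrak{X},\mathbb{D})$ denotes bounded measurable $\mathbb{D}$-valued functions with sup norm $\|\cdot\|$, and $\|T\|$ the induced operator norm; $\langle w\rangle=\int w_x\,\pi(\mathrm{d}x)$. Let $a\in\mathcal{B}(\mathfrak{X},\mathbb{R})$, $s\in\mathcal{B}(\mathfrak{X}^2,[0,\infty))$ symmetric, $(Sw)_x=\int s_{xy}w_y\,\pi(\mathrm{d}y)$, $S_x:=(y\mapsto s_{xy})$, and $\kappa:=\|a\|+2\|S\|^{1/2}$. $m:\mathbb{H}\to\mathcal{B}(\mathfrak{X},\mathbb{H})$ is the unique solution of $-1/m(z)=z+a+Sm(z)$, $z\in\mathbb{H}$ (upper half-plane). Comparison notation: for non-negative functions $\varphi,\psi$, $\varphi\lesssim\psi$ means $\varphi\le C\psi$ for a constant $0<C<\infty$ depending only on $s$ and $a$; $\varphi\sim\psi$ means $\varphi\lesssim\psi\lesssim\varphi$. Assumptions: (A) there is a symmetric $r\in\mathcal{B}(\mathfrak{X}^2,[0,\infty))$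 with $s_{xy}\ge\int r_{xu}r_{uy}\,\pi(\mathrm{d}u)$ and $\inf_x\int r_{xy}\,\pi(\mathrm{d}y)>0$. (B) There is $K\in\mathbb{N}$ with $\inf_{x,y}s^{(K)}_{xy}>0$, $s^{(K)}$ the kernel of $S^K$. (C) $\lim_{\varepsilon\downarrow0}\inf_{x}\int\frac{\pi(\mathrm{d}y)}{\varepsilon+(a_x-a_y)^2+\langle (S_x-S_y)^2\rangle}=\infty$. *)

theory Defs
  imports "HOL-Probability.Probability"
begin

definition supnorm :: "'a measure \<Rightarrow> ('a \<Rightarrow> 'b::real_normed_vector) \<Rightarrow> real" where
  "supnorm M f = (SUP x\<in>space M. norm (f x))"

definition bmeas :: "'a measure \<Rightarrow> ('a \<Rightarrow> 'b::{real_normed_vector, second_countable_topology}) set" where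
  "bmeas M = {f. f \<in> borel_measurable M \<and> bounded (f ` space M)}"

definition Sop :: "'a measure \<Rightarrow> ('a \<Rightarrow> 'a \<Rightarrow> real) \<Rightarrow> ('a \<Rightarrow> complex) \<Rightarrow> 'a \<Rightarrow> complex" where
  "Sop M s w x = (LINT y|M. complex_of_real (s x y) * w y)"

definition Sopnorm :: "'a measure \<Rightarrow> ('a \<Rightarrow> 'a \<Rightarrow> real) \<Rightarrow> real" where
  "Sopnorm M s = Sup {supnorm M (Sop M s w) | w. w \<in> bmeas M \<and> supnorm M w \<le> 1}"

definition kappa :: "'a measure \<Rightarrow> ('a \<Rightarrow> real) \<Rightarrow> ('a \<Rightarrow> 'a \<Rightarrow> real) \<Rightarrow> real" where
  "kappa M a s = supnorm M a + 2 * sqrt (Sopnorm M s)"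

text \<open>Iterated kernels: kern_iter M s n is the kernel of S^(n+1).\<close>
primrec kern_iter :: "'a measure \<Rightarrow> ('a \<Rightarrow> 'a \<Rightarrow> real) \<Rightarrow> nat \<Rightarrow> 'a \<Rightarrow> 'a \<Rightarrow> real" where
  "kern_iter M s 0 = s"
| "kern_iter M s (Suc n) = (\<lambda>x y. LINT u|M. kern_iter M s n x u * s u y)"

text \<open>Kernel s^(K) of S^K, for K >= 1.\<close>
definition kern_pow :: "'a measure \<Rightarrow> ('a \<Rightarrow> 'a \<Rightarrow> real) \<Rightarrow> nat \<Rightarrow> 'a \<Rightarrow> 'a \<Rightarrow> real" where
  "kern_pow M s K = kern_iter M s (K - 1)"

end

theory Submission
  imports Defs
begin

lemma quad:
  fixes F B H :: real
  assumes F: "0 \<le> F" and q: "\<And>t. 0 \<le> t\<^sup>2 * F - 2 * t * B + H"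
  shows "B\<^sup>2 \<le> F * H"
proof (cases "F = 0")
  case True
  show ?thesis
  proof (cases "B = 0")
    case False
    have "0 \<le> ((H+1)/(2*B))\<^sup>2 * F - 2 * ((H+1)/(2*B)) * B + H" by (rule q)
    with True False show ?thesis by simp
  qed (use True q[of 0] in simp)
next
  case False
  hence Fp: "0 < F" using F by simp
  have "0 \<le> (B/F)\<^sup>2 * F - 2 * (B/F) * B + H" by (rule q)
  hence "0 \<le> H - B\<^sup>2 / F" using Fp by (simp add: power2_eq_square field_simps)
  thus ?thesis using Fp by (simp add: field_simps)
qed

context prob_space begin

lemma meas2:
  assumes f: "(\<lambda>(x,y). f x y) \<in> borel_measurable (M \<Otimes>\<^sub>M M)"
    and g: "g \<in> N \<rightarrow>\<^sub>M M" and h: "h \<in> N \<rightarrow>\<^sub>M M"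
  shows "(\<lambda>t. f (g t) (h t)) \<in> borel_measurable N"
  using measurable_compose[OF measurable_Pair[OF g h] f] by simp

lemma bint:
  fixes f :: "'a \<Rightarrow> 'b::{banach,second_countable_topology}"
  assumes "f \<in> borel_measurable M" "\<And>x. x \<in> space M \<Longrightarrow> norm (f x) \<le> B"
  shows "integrable M f"
  using assms by (intro integrable_const_bound[where B=B]) (auto intro: AE_I2)

lemma int_le_const: "integrable M f \<Longrightarrow> (\<And>x. x\<in>space M \<Longrightarrow> f x \<le> (c::real)) \<Longrightarrow> integral\<^sup>L M f \<le> c"
  using integral_mono[of M f "\<lambda>_. c"] by (simp add: prob_space)

lemma int_ge_const: "integrable M f \<Longrightarrow> (\<And>x. x\<in>space M \<Longrightarrow> (c::real) \<le> f x) \<Longrightarrow> c \<le> integral\<^sup>L M f"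
  using integral_mono[of M "\<lambda>_. c" f] by (simp add: prob_space)

lemma CSI:
  fixes f g :: "'a \<Rightarrow> real"
  assumes f: "f \<in> borel_measurable M" "\<And>x. x \<in> space M \<Longrightarrow> \<bar>f x\<bar> \<le> B1"
    and g: "g \<in> borel_measurable M" "\<And>x. x \<in> space M \<Longrightarrow> \<bar>g x\<bar> \<le> B2"
  shows "(\<integral>x. f x * g x \<partial>M)\<^sup>2 \<le> (\<integral>x. (f x)\<^sup>2 \<partial>M) * (\<integral>x. (g x)\<^sup>2 \<partial>M)"
proof (rule quad)
  have B1: "0 \<le> B1" and B2: "0 \<le> B2" using f(2) g(2) not_empty
    by (meson abs_ge_zero ex_in_conv order_trans)+
  have iff: "integrable M (\<lambda>x. (f x)\<^sup>2)"
    apply (rule bint[where B="B1\<^sup>2"]) using f(1) apply measurable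
    using f(2) B1 by simp (metis abs_le_square_iff abs_of_nonneg)
  have igg: "integrable M (\<lambda>x. (g x)\<^sup>2)"
    apply (rule bint[where B="B2\<^sup>2"]) using g(1) apply measurable
    using g(2) B2 by simp (metis abs_le_square_iff abs_of_nonneg)
  have ifg: "integrable M (\<lambda>x. f x * g x)"
    apply (rule bint[where B="B1*B2"]) using f(1) g(1) apply measurable
    using f(2) g(2) B1 B2 by (simp add: abs_mult mult_mono)
  show "0 \<le> (\<integral>x. (f x)\<^sup>2 \<partial>M)" by (rule integral_nonneg_AE) auto
  fix t :: real
  have "0 \<le> (\<integral>x. (t * f x - g x)\<^sup>2 \<partial>M)" by (rule integral_nonneg_AE) auto
  also have "(\<integral>x. (t * f x - g x)\<^sup>2 \<partial>M) = (\<integral>x. t\<^sup>2 * (f x)\<^sup>2 - 2 * t * (f x * g x) + (g x)\<^sup>2 \<partial>M)"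
    by (intro Bochner_Integration.integral_cong) (auto simp: power2_eq_square algebra_simps)
  also have "\<dots> = t\<^sup>2 * (\<integral>x. (f x)\<^sup>2 \<partial>M) - 2 * t * (\<integral>x. f x * g x \<partial>M) + (\<integral>x. (g x)\<^sup>2 \<partial>M)"
    using iff igg ifg by simp
  finally show "0 \<le> t\<^sup>2 * (\<integral>x. (f x)\<^sup>2 \<partial>M) - 2 * t * (\<integral>x. f x * g x \<partial>M) + (\<integral>x. (g x)\<^sup>2 \<partial>M)" .
qed

lemma pp: "pair_prob_space M M"
  by (simp add: pair_prob_space_def pair_sigma_finite_def prob_space_axioms
      sigma_finite_measure_axioms)

lemma fubini_swap:
  fixes f :: "'a \<Rightarrow> 'a \<Rightarrow> real"
  assumes f: "(\<lambda>(x,y). f x y) \<in> borel_measurable (M \<Otimes>\<^sub>M M)"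
    and b: "\<And>x y. x \<in> space M \<Longrightarrow> y \<in> space M \<Longrightarrow> \<bar>f x y\<bar> \<le> B"
  shows "(\<integral>x. (\<integral>y. f x y \<partial>M) \<partial>M) = (\<integral>y. (\<integral>x. f x y \<partial>M) \<partial>M)"
proof -
  interpret P: pair_prob_space M M by (rule pp)
  have "integrable (M \<Otimes>\<^sub>M M) (\<lambda>(x,y). f x y)"
    using f b by (intro P.P.integrable_const_bound[where B=B]) (auto intro!: AE_I2 simp: space_pair_measure)
  from P.Fubini_integral[OF this] show ?thesis by simp
qed

end

locale qve = prob_space M for M :: "'a measure" +
  fixes s :: "'a \<Rightarrow> 'a \<Rightarrow> real" and a :: "'a \<Rightarrow> real" and Bs Ba :: real
  assumes s_meas: "(\<lambda>(x,y). s x y) \<in> borel_measurable (M \<Otimes>\<^sub>M M)"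
    and s_nn: "\<And>x y. x\<in>space M \<Longrightarrow> y\<in>space M \<Longrightarrow> 0 \<le> s x y"
    and s_le: "\<And>x y. x\<in>space M \<Longrightarrow> y\<in>space M \<Longrightarrow> s x y \<le> Bs"
    and s_sym: "\<And>x y. x\<in>space M \<Longrightarrow> y\<in>space M \<Longrightarrow> s x y = s y x"
    and a_meas: "a \<in> borel_measurable M"
    and a_le: "\<And>x. x \<in> space M \<Longrightarrow> \<bar>a x\<bar> \<le> Ba"
begin

lemma s_sec: "x \<in> space M \<Longrightarrow> (\<lambda>y. s x y) \<in> borel_measurable M"
  by (rule meas2[OF s_meas]) auto

lemma s_abs: "x\<in>space M \<Longrightarrow> y\<in>space M \<Longrightarrow> \<bar>s x y\<bar> \<le> Bs"
  using s_nn s_le by fastforce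

lemma Bs_nn: "0 \<le> Bs"
  using s_nn s_le not_empty by (meson order_trans ex_in_conv)


lemma ki_props: "(\<lambda>(x,y). kern_iter M s n x y) \<in> borel_measurable (M \<Otimes>\<^sub>M M) \<and>
   (\<forall>x\<in>space M. \<forall>y\<in>space M. 0 \<le> kern_iter M s n x y \<and> kern_iter M s n x y \<le> Bs ^ Suc n)"
proof (induction n)
  case 0
  show ?case using s_meas s_nn s_le by simp
next
  case (Suc n)
  define k where "k = kern_iter M s n"
  have km: "(\<lambda>(x,y). k x y) \<in> borel_measurable (M \<Otimes>\<^sub>M M)" and
    kb: "\<And>x y. x\<in>space M \<Longrightarrow> y\<in>space M \<Longrightarrow> 0 \<le> k x y \<and> k x y \<le> Bs ^ Suc n"
    using Suc.IH unfolding k_def by auto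
  have "(\<lambda>q. k (fst (fst q)) (snd q) * s (snd q) (snd (fst q))) \<in> borel_measurable ((M \<Otimes>\<^sub>M M) \<Otimes>\<^sub>M M)"
    by (intro borel_measurable_times meas2[OF km] meas2[OF s_meas]) auto
  hence "(\<lambda>(p,u). k (fst p) u * s u (snd p)) \<in> borel_measurable ((M \<Otimes>\<^sub>M M) \<Otimes>\<^sub>M M)"
    by (simp add: case_prod_beta')
  hence "(\<lambda>p. \<integral>u. k (fst p) u * s u (snd p) \<partial>M) \<in> borel_measurable (M \<Otimes>\<^sub>M M)"
    by (rule borel_measurable_lebesgue_integral)
  hence m: "(\<lambda>(x,y). kern_iter M s (Suc n) x y) \<in> borel_measurable (M \<Otimes>\<^sub>M M)"
    by (simp add: k_def case_prod_beta')
  have b: "0 \<le> kern_iter M s (Suc n) x y \<and> kern_iter M s (Suc n) x y \<le> Bs ^ Suc (Suc n)"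
    if x: "x\<in>space M" and y: "y\<in>space M" for x y
  proof -
    have i: "integrable M (\<lambda>u. k x u * s u y)"
      apply (rule bint[where B="Bs ^ Suc n * Bs"])
      using x y apply (intro borel_measurable_times meas2[OF km] meas2[OF s_meas]; simp)
      using kb x y s_abs Bs_nn by (simp add: abs_mult) (intro mult_mono, auto)
    have "0 \<le> (\<integral>u. k x u * s u y \<partial>M)"
      using kb x y s_nn by (intro integral_nonneg_AE) (auto intro!: AE_I2)
    moreover have "(\<integral>u. k x u * s u y \<partial>M) \<le> Bs ^ Suc n * Bs"
      using i by (rule int_le_const) (use kb x y s_nn s_le Bs_nn in \<open>auto intro!: mult_mono\<close>)
    ultimately show ?thesis by (simp add: k_def mult.commute)
  qed
  show ?case using m b by blast
qed

end

locale qvez = qve +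
  fixes z :: complex and mm :: "'a \<Rightarrow> complex" and Bm :: real
  assumes eta: "0 < Im z" and mm_meas: "mm \<in> borel_measurable M"
    and mm_le: "\<And>x. x\<in>space M \<Longrightarrow> cmod (mm x) \<le> Bm"
    and mm_H: "\<And>x. x\<in>space M \<Longrightarrow> 0 < Im (mm x)"
    and mm_eq: "\<And>x. x\<in>space M \<Longrightarrow> - 1 / mm x = z + of_real (a x) + (\<integral>y. of_real (s x y) * mm y \<partial>M)"
begin

definition v where "v x = Im (mm x)"

lemma v_meas: "v \<in> borel_measurable M"
  unfolding v_def using mm_meas by measurable

lemma v_pos: "x\<in>space M \<Longrightarrow> 0 < v x" using mm_H v_def by simp

lemma v_le: "x\<in>space M \<Longrightarrow> \<bar>v x\<bar> \<le> Bm"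
  unfolding v_def using mm_le abs_Im_le_cmod order_trans by blast

lemma mm_nz: "x\<in>space M \<Longrightarrow> mm x \<noteq> 0" using mm_H by force

lemma int_sm: "x\<in>space M \<Longrightarrow> integrable M (\<lambda>y. of_real (s x y) * mm y)"
  apply (rule bint[where B="Bs*Bm"])
  using s_sec mm_meas apply measurable
  apply (simp add: norm_mult)
  by (intro mult_mono) (auto simp: s_abs mm_le Bs_nn)

lemma int_sv: "x\<in>space M \<Longrightarrow> integrable M (\<lambda>y. s x y * v y)"
  apply (rule bint[where B="Bs*Bm"])
  using s_sec v_meas apply measurable
  by (simp add: abs_mult) (intro mult_mono, auto simp: s_abs v_le Bs_nn)

lemma im_eq: "x\<in>space M \<Longrightarrow> v x / (cmod (mm x))\<^sup>2 = Im z + (\<integral>y. s x y * v y \<partial>M)"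
proof -
  assume x: "x\<in>space M"
  have "Im (- 1 / mm x) = v x / (cmod (mm x))\<^sup>2"
    by (simp add: v_def Im_divide cmod_power2)
  moreover have "Im (\<integral>y. of_real (s x y) * mm y \<partial>M) = (\<integral>y. s x y * v y \<partial>M)"
    using integral_Im[OF int_sm[OF x]] by (simp add: v_def)
  moreover have "Im (- 1 / mm x) = Im z + Im (\<integral>y. of_real (s x y) * mm y \<partial>M)"
    using mm_eq[OF x] by simp
  ultimately show ?thesis by simp
qed


lemma Sm_le:
  assumes x: "x\<in>space M" and U: "\<And>y. y\<in>space M \<Longrightarrow> cmod (mm y) \<le> U"
  shows "cmod (\<integral>y. of_real (s x y) * mm y \<partial>M) \<le> Bs * U"
proof -
  have "cmod (\<integral>y. of_real (s x y) * mm y \<partial>M) \<le> (\<integral>y. cmod (of_real (s x y) * mm y) \<partial>M)"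
    by (rule integral_norm_bound)
  also have "\<dots> \<le> Bs * U"
    apply (rule int_le_const)
    using int_sm[OF x] apply (rule integrable_norm)
    by (simp add: norm_mult) (intro mult_mono, auto simp: s_abs U Bs_nn x)
  finally show ?thesis .
qed

lemma inv_le:
  assumes x: "x\<in>space M" and U: "\<And>y. y\<in>space M \<Longrightarrow> cmod (mm y) \<le> U"
  shows "cmod (1 / mm x) \<le> cmod z + Ba + Bs * U"
proof -
  have "cmod (1 / mm x) = cmod (- 1 / mm x)" by (simp add: norm_divide)
  also have "\<dots> \<le> cmod z + cmod (of_real (a x)) + cmod (\<integral>y. of_real (s x y) * mm y \<partial>M)"
    unfolding mm_eq[OF x] by (meson norm_triangle_le norm_triangle_ineq order_refl add_mono)
  also have "\<dots> \<le> cmod z + Ba + Bs * U"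
    using Sm_le[OF x U] a_le[OF x] by simp
  finally show ?thesis .
qed

lemma Sv_nn: "x\<in>space M \<Longrightarrow> 0 \<le> (\<integral>y. s x y * v y \<partial>M)"
  by (rule integral_nonneg_AE) (auto intro!: AE_I2 mult_nonneg_nonneg s_nn simp: less_imp_le v_pos)

lemma Bm_nn: "0 \<le> Bm"
  using mm_le not_empty by (meson norm_ge_zero order_trans ex_in_conv)

definition vlow where "vlow = Im z / (cmod z + Ba + Bs * Bm)\<^sup>2"

lemma D_pos: "0 < cmod z + Ba + Bs * Bm"
proof -
  obtain x where x: "x \<in> space M" using not_empty by blast
  have "0 < cmod (1 / mm x)" using mm_nz[OF x] by simp
  also have "\<dots> \<le> cmod z + Ba + Bs * Bm" by (rule inv_le[OF x mm_le])
  finally show ?thesis .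
qed

lemma vlow_pos: "0 < vlow"
  unfolding vlow_def using eta D_pos by simp

lemma mm_sq: "x\<in>space M \<Longrightarrow> (cmod (mm x))\<^sup>2 = v x / (Im z + (\<integral>y. s x y * v y \<partial>M))"
  using im_eq[of x] mm_nz[of x] eta Sv_nn[of x] by (auto simp: field_simps)


lemma inv_diff: "x\<in>space M \<Longrightarrow> y\<in>space M \<Longrightarrow>
   1 / mm y - 1 / mm x = of_real (a x - a y) + (\<integral>u. of_real (s x u - s y u) * mm u \<partial>M)"
proof -
  assume x: "x\<in>space M" and y: "y\<in>space M"
  have ix: "1 / mm x = - (z + of_real (a x) + (\<integral>u. of_real (s x u) * mm u \<partial>M))"
    using mm_eq[OF x] by (metis minus_divide_left minus_minus)
  have iy: "1 / mm y = - (z + of_real (a y) + (\<integral>u. of_real (s y u) * mm u \<partial>M))"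
    using mm_eq[OF y] by (metis minus_divide_left minus_minus)
  have "(\<integral>u. of_real (s x u - s y u) * mm u \<partial>M)
      = (\<integral>u. of_real (s x u) * mm u - of_real (s y u) * mm u \<partial>M)"
    by (intro Bochner_Integration.integral_cong) (auto simp: algebra_simps)
  also have "\<dots> = (\<integral>u. of_real (s x u) * mm u \<partial>M) - (\<integral>u. of_real (s y u) * mm u \<partial>M)"
    by (rule Bochner_Integration.integral_diff[OF int_sm[OF x] int_sm[OF y]])
  finally show ?thesis using ix iy by simp
qed

lemma Sdiff_bd: "x\<in>space M \<Longrightarrow> y\<in>space M \<Longrightarrow>
   cmod (\<integral>u. of_real (s x u - s y u) * mm u \<partial>M) \<le> (\<integral>u. \<bar>s x u - s y u\<bar> * cmod (mm u) \<partial>M)"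
proof -
  assume x: "x\<in>space M" and y: "y\<in>space M"
  have "cmod (\<integral>u. of_real (s x u - s y u) * mm u \<partial>M) \<le> (\<integral>u. cmod (of_real (s x u - s y u) * mm u) \<partial>M)"
    by (rule integral_norm_bound)
  also have "\<dots> = (\<integral>u. \<bar>s x u - s y u\<bar> * cmod (mm u) \<partial>M)"
    by (simp only: norm_mult norm_of_real)
  finally show ?thesis .
qed

lemma P_meas: "x\<in>space M \<Longrightarrow> (\<lambda>y. \<integral>u. (s x u - s y u)\<^sup>2 \<partial>M) \<in> borel_measurable M"
proof -
  assume x: "x\<in>space M"
  have "(\<lambda>p. (s x (snd p) - s (fst p) (snd p))\<^sup>2) \<in> borel_measurable (M \<Otimes>\<^sub>M M)"
    using x by (intro borel_measurable_power borel_measurable_diff meas2[OF s_meas]) auto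
  hence "(\<lambda>(y,u). (s x u - s y u)\<^sup>2) \<in> borel_measurable (M \<Otimes>\<^sub>M M)"
    by (simp add: case_prod_beta')
  thus ?thesis by (rule borel_measurable_lebesgue_integral)
qed

lemma P_nn: "0 \<le> (\<integral>u. (s x u - s y u)\<^sup>2 \<partial>M)"
  by (rule integral_nonneg_AE) auto

lemma invsq:
  assumes x: "x\<in>space M" and y: "y\<in>space M" and L: "(\<integral>u. (cmod (mm u))\<^sup>2 \<partial>M) \<le> L2b"
  shows "(cmod (1 / mm y))\<^sup>2 \<le> 3 * ((cmod (1 / mm x))\<^sup>2 + (a x - a y)\<^sup>2 + L2b * (\<integral>u. (s x u - s y u)\<^sup>2 \<partial>M))"
proof -
  define I where "I = (\<integral>u. \<bar>s x u - s y u\<bar> * cmod (mm u) \<partial>M)"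
  define P where "P = (\<integral>u. (s x u - s y u)\<^sup>2 \<partial>M)"
  have I0: "0 \<le> I" unfolding I_def by (rule integral_nonneg_AE) auto
  have "cmod (1 / mm y) = cmod (1 / mm x + (of_real (a x - a y) + (\<integral>u. of_real (s x u - s y u) * mm u \<partial>M)))"
    using inv_diff[OF x y] by (metis diff_add_cancel add.commute)
  also have "\<dots> \<le> cmod (1 / mm x) + (cmod (of_real (a x - a y)) + cmod (\<integral>u. of_real (s x u - s y u) * mm u \<partial>M))"
    by (meson add_left_mono norm_triangle_ineq order_trans)
  also have "\<dots> \<le> cmod (1 / mm x) + \<bar>a x - a y\<bar> + I"
    using Sdiff_bd[OF x y] unfolding I_def norm_of_real by simp
  finally have t: "cmod (1 / mm y) \<le> cmod (1 / mm x) + \<bar>a x - a y\<bar> + I" .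
  have "I\<^sup>2 \<le> (\<integral>u. \<bar>s x u - s y u\<bar>\<^sup>2 \<partial>M) * (\<integral>u. (cmod (mm u))\<^sup>2 \<partial>M)"
    unfolding I_def
  proof (rule CSI[of "\<lambda>u. \<bar>s x u - s y u\<bar>" "2*Bs" "\<lambda>u. cmod (mm u)" Bm])
    show "(\<lambda>u. \<bar>s x u - s y u\<bar>) \<in> borel_measurable M" using s_sec[OF x] s_sec[OF y] by measurable
    show "(\<lambda>u. cmod (mm u)) \<in> borel_measurable M" using mm_meas by measurable
    fix u assume u: "u\<in>space M"
    show "\<bar>\<bar>s x u - s y u\<bar>\<bar> \<le> 2 * Bs" using s_abs[OF x u] s_abs[OF y u] by simp
    show "\<bar>cmod (mm u)\<bar> \<le> Bm" using mm_le[OF u] by simp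
  qed
  also have "\<dots> \<le> P * L2b" unfolding P_def using L P_nn by (simp add: mult_left_mono)
  finally have I2: "I\<^sup>2 \<le> L2b * P" by (simp add: mult.commute)
  have "(cmod (1 / mm y))\<^sup>2 \<le> (cmod (1 / mm x) + \<bar>a x - a y\<bar> + I)\<^sup>2"
    using t by (intro power_mono) auto
  also have "\<dots> \<le> 3 * ((cmod (1 / mm x))\<^sup>2 + (a x - a y)\<^sup>2 + I\<^sup>2)"
  proof -
    have "\<And>p q r::real. (p + q + r)\<^sup>2 \<le> 3 * (p\<^sup>2 + q\<^sup>2 + r\<^sup>2)"
    proof -
      fix p q r :: real
      have "3 * (p\<^sup>2 + q\<^sup>2 + r\<^sup>2) - (p + q + r)\<^sup>2 = (p-q)\<^sup>2 + (q-r)\<^sup>2 + (p-r)\<^sup>2"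
        by (simp add: power2_eq_square algebra_simps)
      moreover have "0 \<le> (p-q)\<^sup>2 + (q-r)\<^sup>2 + (p-r)\<^sup>2" by simp
      ultimately show "(p + q + r)\<^sup>2 \<le> 3 * (p\<^sup>2 + q\<^sup>2 + r\<^sup>2)" by linarith
    qed
    from this[of "cmod (1 / mm x)" "\<bar>a x - a y\<bar>" I] show ?thesis by simp
  qed
  also have "\<dots> \<le> 3 * ((cmod (1 / mm x))\<^sup>2 + (a x - a y)\<^sup>2 + L2b * P)" using I2 by simp
  finally show ?thesis unfolding P_def .
qed


lemma ubound:
  assumes L: "(\<integral>u. (cmod (mm u))\<^sup>2 \<partial>M) \<le> L2b"
    and e0: "0 < \<epsilon>0"
    and Cc: "\<And>\<epsilon> x. 0 < \<epsilon> \<Longrightarrow> \<epsilon> < \<epsilon>0 \<Longrightarrow> x\<in>space M \<Longrightarrow>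
      3 * max 1 L2b * (L2b + 1) \<le> (\<integral>y. 1 / (\<epsilon> + (a x - a y)\<^sup>2 + (\<integral>u. (s x u - s y u)\<^sup>2 \<partial>M)) \<partial>M)"
    and x: "x\<in>space M"
  shows "cmod (mm x) \<le> 1 / sqrt (max 1 L2b * \<epsilon>0)"
proof -
  define K0 where "K0 = max 1 L2b"
  have K0: "1 \<le> K0" "L2b \<le> K0" unfolding K0_def by auto
  define e where "e = (cmod (1 / mm x))\<^sup>2 / K0"
  have ep: "0 < e" unfolding e_def using K0 mm_nz[OF x] by simp
  have "\<epsilon>0 \<le> e"
  proof (rule ccontr)
    assume "\<not> \<epsilon>0 \<le> e"
    hence ee: "e < \<epsilon>0" by simp
    define D where "D y = e + (a x - a y)\<^sup>2 + (\<integral>u. (s x u - s y u)\<^sup>2 \<partial>M)" for y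
    have Dp: "e \<le> D y" for y unfolding D_def using P_nn[of x y] by simp
    have pt: "1 / D y \<le> 3 * K0 * (cmod (mm y))\<^sup>2" if y: "y \<in> space M" for y
    proof -
      have "(cmod (1 / mm y))\<^sup>2 \<le> 3 * ((cmod (1 / mm x))\<^sup>2 + (a x - a y)\<^sup>2 + L2b * (\<integral>u. (s x u - s y u)\<^sup>2 \<partial>M))"
        by (rule invsq[OF x y L])
      also have "\<dots> \<le> 3 * (K0 * D y)"
      proof -
        have "(cmod (1 / mm x))\<^sup>2 = K0 * e" unfolding e_def using K0 by simp
        moreover have "1 * (a x - a y)\<^sup>2 \<le> K0 * (a x - a y)\<^sup>2" using K0 by (intro mult_right_mono) auto
        moreover have "L2b * (\<integral>u. (s x u - s y u)\<^sup>2 \<partial>M) \<le> K0 * (\<integral>u. (s x u - s y u)\<^sup>2 \<partial>M)"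
          using K0 P_nn by (intro mult_right_mono) auto
        ultimately show ?thesis unfolding D_def by (simp add: algebra_simps)
      qed
      finally have h: "1 / (cmod (mm y))\<^sup>2 \<le> 3 * K0 * D y"
        by (simp add: norm_divide power_one_over mult.assoc)
      have "0 < (cmod (mm y))\<^sup>2" using mm_nz[OF y] by simp
      moreover have "0 < D y" using Dp[of y] ep by simp
      ultimately show ?thesis using h K0 by (simp add: field_simps)
    qed
    have iD: "integrable M (\<lambda>y. 1 / D y)"
    proof (rule bint[where B="1/e"])
      show "(\<lambda>y. 1 / D y) \<in> borel_measurable M" unfolding D_def
        using a_meas P_meas[OF x] by measurable
      fix y assume y: "y\<in>space M"
      show "norm (1 / D y) \<le> 1 / e" using Dp[of y] ep by (simp add: frac_le)
    qed
    have im: "integrable M (\<lambda>y. 3 * K0 * (cmod (mm y))\<^sup>2)"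
      apply (rule bint[where B="3*K0*Bm\<^sup>2"]) using mm_meas apply measurable
      using K0 by (simp add: abs_mult, intro mult_left_mono power_mono) (auto simp: mm_le)
    have "3 * K0 * (L2b + 1) \<le> (\<integral>y. 1 / D y \<partial>M)"
      unfolding D_def K0_def using Cc[OF ep ee x] .
    also have "\<dots> \<le> (\<integral>y. 3 * K0 * (cmod (mm y))\<^sup>2 \<partial>M)"
      using iD im pt by (intro integral_mono) auto
    also have "\<dots> = 3 * K0 * (\<integral>y. (cmod (mm y))\<^sup>2 \<partial>M)" by simp
    also have "\<dots> \<le> 3 * K0 * L2b" using L K0 by (intro mult_left_mono) auto
    finally show False using K0 by simp
  qed
  hence "K0 * \<epsilon>0 \<le> (cmod (1 / mm x))\<^sup>2" unfolding e_def using K0 by (simp add: field_simps)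
  hence "(cmod (mm x))\<^sup>2 \<le> 1 / (K0 * \<epsilon>0)"
    using mm_nz[OF x] K0 e0 by (simp add: norm_divide power_one_over field_simps)
  hence "sqrt ((cmod (mm x))\<^sup>2) \<le> sqrt (1 / (K0 * \<epsilon>0))" by (rule real_sqrt_le_mono)
  thus ?thesis unfolding K0_def by (simp add: real_sqrt_divide)
qed


lemma v_Sv: "x\<in>space M \<Longrightarrow> v x = (cmod (mm x))\<^sup>2 * (Im z + (\<integral>y. s x y * v y \<partial>M))"
  using im_eq[of x] mm_nz[of x] by (simp add: field_simps)

lemma v_iter:
  assumes clo: "0 < clo" and lo: "\<And>x. x\<in>space M \<Longrightarrow> clo \<le> (cmod (mm x))\<^sup>2"
  shows "\<forall>x\<in>space M. clo ^ Suc n * (\<integral>y. kern_iter M s n x y * v y \<partial>M) \<le> v x"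
proof (induction n)
  case 0
  show ?case
  proof
    fix x assume x: "x\<in>space M"
    have "clo * (\<integral>y. s x y * v y \<partial>M) \<le> (cmod (mm x))\<^sup>2 * (Im z + (\<integral>y. s x y * v y \<partial>M))"
      using lo[OF x] Sv_nn[OF x] eta by (intro mult_mono) auto
    thus "clo ^ Suc 0 * (\<integral>y. kern_iter M s 0 x y * v y \<partial>M) \<le> v x" using v_Sv[OF x] by simp
  qed
next
  case (Suc n)
  define k where "k = kern_iter M s n"
  have km: "(\<lambda>(x,y). k x y) \<in> borel_measurable (M \<Otimes>\<^sub>M M)" and
    kb: "\<And>x y. x\<in>space M \<Longrightarrow> y\<in>space M \<Longrightarrow> 0 \<le> k x y \<and> k x y \<le> Bs ^ Suc n"
    using ki_props[of n] unfolding k_def by auto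
  have kabs: "\<And>x y. x\<in>space M \<Longrightarrow> y\<in>space M \<Longrightarrow> \<bar>k x y\<bar> \<le> Bs ^ Suc n" using kb by fastforce
  show ?case
  proof
    fix x assume x: "x\<in>space M"
    have m: "(\<lambda>(y,u). k x u * s u y * v y) \<in> borel_measurable (M \<Otimes>\<^sub>M M)"
    proof -
      have "(\<lambda>p. k x (snd p) * s (snd p) (fst p) * v (fst p)) \<in> borel_measurable (M \<Otimes>\<^sub>M M)"
        using x by (intro borel_measurable_times meas2[OF km] meas2[OF s_meas]
            measurable_compose[OF measurable_fst v_meas]) auto
      thus ?thesis by (simp add: case_prod_beta')
    qed
    have "(\<integral>y. kern_iter M s (Suc n) x y * v y \<partial>M) = (\<integral>y. (\<integral>u. k x u * s u y \<partial>M) * v y \<partial>M)"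
      by (simp add: k_def)
    also have "\<dots> = (\<integral>y. (\<integral>u. k x u * s u y * v y \<partial>M) \<partial>M)" by simp
    also have "\<dots> = (\<integral>u. (\<integral>y. k x u * s u y * v y \<partial>M) \<partial>M)"
      apply (rule fubini_swap[where B="Bs ^ Suc n * Bs * Bm", OF m])
      by (simp add: abs_mult x) (intro mult_mono, auto simp: x kabs[simplified] s_abs v_le Bs_nn)
    also have "\<dots> = (\<integral>u. k x u * (\<integral>y. s u y * v y \<partial>M) \<partial>M)"
      by (simp add: mult.assoc)
    finally have e: "(\<integral>y. kern_iter M s (Suc n) x y * v y \<partial>M) = (\<integral>u. k x u * (\<integral>y. s u y * v y \<partial>M) \<partial>M)" .
    have "clo * (\<integral>u. k x u * (\<integral>y. s u y * v y \<partial>M) \<partial>M) = (\<integral>u. k x u * (clo * (\<integral>y. s u y * v y \<partial>M)) \<partial>M)"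
      by (simp add: mult.left_commute)
    also have "\<dots> \<le> (\<integral>u. k x u * v u \<partial>M)"
    proof (rule integral_mono)
      have Svm: "(\<lambda>u. \<integral>y. s u y * v y \<partial>M) \<in> borel_measurable M"
      proof -
        have "(\<lambda>p. s (fst p) (snd p) * v (snd p)) \<in> borel_measurable (M \<Otimes>\<^sub>M M)"
          by (intro borel_measurable_times meas2[OF s_meas] measurable_compose[OF measurable_snd v_meas]) auto
        hence "(\<lambda>(u,y). s u y * v y) \<in> borel_measurable (M \<Otimes>\<^sub>M M)" by (simp add: case_prod_beta')
        thus ?thesis by (rule borel_measurable_lebesgue_integral)
      qed
      show "integrable M (\<lambda>u. k x u * (clo * (\<integral>y. s u y * v y \<partial>M)))"
      proof (rule bint[where B="Bs ^ Suc n * (clo * (Bs * Bm))"])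
        show "(\<lambda>u. k x u * (clo * (\<integral>y. s u y * v y \<partial>M))) \<in> borel_measurable M"
          using x Svm by (intro borel_measurable_times borel_measurable_const meas2[OF km]) auto
        fix u assume u: "u\<in>space M"
        have "(\<integral>y. s u y * v y \<partial>M) \<le> Bs * Bm"
          using int_sv[OF u] by (rule int_le_const) (auto intro!: mult_mono simp: u s_le v_le Bs_nn
              order_trans[OF abs_ge_self v_le] less_imp_le[OF v_pos])
        hence "\<bar>clo * (\<integral>y. s u y * v y \<partial>M)\<bar> \<le> clo * (Bs * Bm)" using clo Sv_nn[OF u] by simp
        thus "norm (k x u * (clo * (\<integral>y. s u y * v y \<partial>M))) \<le> Bs ^ Suc n * (clo * (Bs * Bm))"
          unfolding real_norm_def abs_mult[of "k x u"] using kabs[OF x u] Bs_nn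
          by (intro mult_mono) auto
      qed
      show "integrable M (\<lambda>u. k x u * v u)"
        apply (rule bint[where B="Bs ^ Suc n * Bm"])
        using x v_meas apply (intro borel_measurable_times meas2[OF km]; simp)
        by (simp add: abs_mult) (intro mult_mono, auto simp: x kabs[simplified] v_le Bs_nn)
      fix u assume u: "u\<in>space M"
      have "clo * (\<integral>y. s u y * v y \<partial>M) \<le> (cmod (mm u))\<^sup>2 * (Im z + (\<integral>y. s u y * v y \<partial>M))"
        using lo[OF u] Sv_nn[OF u] eta by (intro mult_mono) auto
      thus "k x u * (clo * (\<integral>y. s u y * v y \<partial>M)) \<le> k x u * v u"
        using v_Sv[OF u] kb[OF x u] by (intro mult_left_mono) auto
    qed
    finally have "clo * (\<integral>y. kern_iter M s (Suc n) x y * v y \<partial>M) \<le> (\<integral>u. k x u * v u \<partial>M)"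
      using e by simp
    hence "clo ^ Suc (Suc n) * (\<integral>y. kern_iter M s (Suc n) x y * v y \<partial>M) \<le> clo ^ Suc n * (\<integral>u. k x u * v u \<partial>M)"
      using clo by (simp add: mult.assoc mult_left_mono)
    also have "\<dots> \<le> v x" using Suc.IH x unfolding k_def by blast
    finally show "clo ^ Suc (Suc n) * (\<integral>y. kern_iter M s (Suc n) x y * v y \<partial>M) \<le> v x" .
  qed
qed


lemma v_compare:
  assumes clo: "0 < clo" and lo: "\<And>x. x\<in>space M \<Longrightarrow> clo \<le> (cmod (mm x))\<^sup>2"
    and hi: "\<And>x. x\<in>space M \<Longrightarrow> (cmod (mm x))\<^sup>2 \<le> chi"
    and dl: "0 < \<delta>" and K: "1 \<le> K"
    and kd: "\<And>x y. x\<in>space M \<Longrightarrow> y\<in>space M \<Longrightarrow> \<delta> \<le> kern_pow M s K x y"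
    and x: "x\<in>space M" and y: "y\<in>space M"
  shows "v x \<le> chi * (1 / clo + Bs / (clo ^ K * \<delta>)) * v y"
proof -
  have vi: "integrable M v" using v_meas v_le by (intro bint[where B=Bm]) auto
  have vy1: "clo * Im z \<le> v y"
  proof -
    have "clo * Im z \<le> (cmod (mm y))\<^sup>2 * (Im z + (\<integral>u. s y u * v u \<partial>M))"
      using lo[OF y] Sv_nn[OF y] eta by (intro mult_mono) auto
    thus ?thesis using v_Sv[OF y] by simp
  qed
  have KK: "Suc (K - 1) = K" using K by simp
  have kp: "(\<lambda>(x,y). kern_pow M s K x y) \<in> borel_measurable (M \<Otimes>\<^sub>M M) \<and>
    (\<forall>x\<in>space M. \<forall>y\<in>space M. 0 \<le> kern_pow M s K x y \<and> kern_pow M s K x y \<le> Bs ^ K)"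
    using ki_props[of "K - 1"] KK unfolding kern_pow_def by simp
  have "clo ^ K * (\<integral>u. kern_pow M s K y u * v u \<partial>M) \<le> v y"
    using v_iter[OF clo lo, of "K - 1"] y KK unfolding kern_pow_def by simp
  moreover have "\<delta> * (\<integral>u. v u \<partial>M) \<le> (\<integral>u. kern_pow M s K y u * v u \<partial>M)"
  proof -
    have "\<delta> * (\<integral>u. v u \<partial>M) = (\<integral>u. \<delta> * v u \<partial>M)" by simp
    also have "\<dots> \<le> (\<integral>u. kern_pow M s K y u * v u \<partial>M)"
    proof (rule integral_mono)
      show "integrable M (\<lambda>u. \<delta> * v u)" using vi by simp
      show "integrable M (\<lambda>u. kern_pow M s K y u * v u)"
        apply (rule bint[where B="Bs ^ K * Bm"])
        using kp y v_meas apply (intro borel_measurable_times meas2[of "kern_pow M s K"]; simp)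
        using kp y v_le Bs_nn by (simp add: abs_mult) (intro mult_mono, auto)
      fix u assume u: "u\<in>space M"
      show "\<delta> * v u \<le> kern_pow M s K y u * v u"
        using kd[OF y u] v_pos[OF u] by (intro mult_right_mono) auto
    qed
    finally show ?thesis .
  qed
  ultimately have "clo ^ K * (\<delta> * (\<integral>u. v u \<partial>M)) \<le> v y"
    using clo by (meson mult_left_mono order_trans zero_le_power less_imp_le)
  hence Ev: "(\<integral>u. v u \<partial>M) \<le> v y / (clo ^ K * \<delta>)"
    using clo dl by (simp add: field_simps)
  have Sx: "(\<integral>u. s x u * v u \<partial>M) \<le> Bs * (\<integral>u. v u \<partial>M)"
  proof -
    have "(\<integral>u. s x u * v u \<partial>M) \<le> (\<integral>u. Bs * v u \<partial>M)"
      using int_sv[OF x] vi s_le[OF x] v_pos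
      by (intro integral_mono) (auto intro!: mult_right_mono simp: less_imp_le)
    thus ?thesis by simp
  qed
  have "v x = (cmod (mm x))\<^sup>2 * (Im z + (\<integral>u. s x u * v u \<partial>M))" by (rule v_Sv[OF x])
  also have "\<dots> \<le> chi * (v y / clo + Bs * (v y / (clo ^ K * \<delta>)))"
  proof (rule mult_mono)
    show "(cmod (mm x))\<^sup>2 \<le> chi" by (rule hi[OF x])
    have "Im z \<le> v y / clo" using vy1 clo by (simp add: field_simps)
    moreover have "Bs * (\<integral>u. v u \<partial>M) \<le> Bs * (v y / (clo ^ K * \<delta>))"
      using Ev Bs_nn by (intro mult_left_mono) auto
    ultimately show "Im z + (\<integral>u. s x u * v u \<partial>M) \<le> v y / clo + Bs * (v y / (clo ^ K * \<delta>))"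
      using Sx by linarith
    show "0 \<le> chi" using hi[OF x] by (meson order_trans zero_le_power2)
    show "0 \<le> Im z + (\<integral>u. s x u * v u \<partial>M)" using eta Sv_nn[OF x] by simp
  qed
  also have "\<dots> = chi * (1 / clo + Bs / (clo ^ K * \<delta>)) * v y" by (simp add: field_simps)
  finally show ?thesis .
qed

lemma v_low: "x\<in>space M \<Longrightarrow> vlow \<le> v x"
proof -
  assume x: "x\<in>space M"
  have D: "0 < cmod z + Ba + Bs * Bm" by (rule D_pos)
  have "1 / cmod (mm x) \<le> cmod z + Ba + Bs * Bm" using inv_le[OF x mm_le] by (simp add: norm_divide)
  hence "1 / (cmod z + Ba + Bs * Bm) \<le> cmod (mm x)" using mm_nz[OF x] D
    by (simp add: field_simps)
  hence "(1 / (cmod z + Ba + Bs * Bm))\<^sup>2 \<le> (cmod (mm x))\<^sup>2"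
    using D by (intro power_mono) auto
  hence "(1 / (cmod z + Ba + Bs * Bm))\<^sup>2 * Im z \<le> (cmod (mm x))\<^sup>2 * Im z"
    using eta by (intro mult_right_mono) auto
  hence "vlow \<le> (cmod (mm x))\<^sup>2 * Im z" unfolding vlow_def
    by (simp add: power_divide)
  also have "\<dots> \<le> (cmod (mm x))\<^sup>2 * (Im z + (\<integral>y. s x y * v y \<partial>M))"
    using Sv_nn[OF x] by (intro mult_left_mono) auto
  also have "\<dots> = v x" using im_eq[OF x] mm_nz[OF x] by (simp add: field_simps)
  finally show ?thesis .
qed

end

locale qvr = qvez +
  fixes r :: "'a \<Rightarrow> 'a \<Rightarrow> real" and Br \<rho>0 :: real
  assumes r_meas: "(\<lambda>(x,y). r x y) \<in> borel_measurable (M \<Otimes>\<^sub>M M)"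
    and r_nn: "\<And>x y. x\<in>space M \<Longrightarrow> y\<in>space M \<Longrightarrow> 0 \<le> r x y"
    and r_le: "\<And>x y. x\<in>space M \<Longrightarrow> y\<in>space M \<Longrightarrow> r x y \<le> Br"
    and r_sym: "\<And>x y. x\<in>space M \<Longrightarrow> y\<in>space M \<Longrightarrow> r x y = r y x"
    and r_s: "\<And>x y. x\<in>space M \<Longrightarrow> y\<in>space M \<Longrightarrow> (\<integral>u. r x u * r u y \<partial>M) \<le> s x y"
    and rho: "\<And>x. x\<in>space M \<Longrightarrow> \<rho>0 \<le> (\<integral>y. r x y \<partial>M)"
    and rho_pos: "0 < \<rho>0"
begin

lemma r_sec: "x \<in> space M \<Longrightarrow> (\<lambda>y. r x y) \<in> borel_measurable M"
  by (rule meas2[OF r_meas]) auto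

lemma r_abs: "x\<in>space M \<Longrightarrow> y\<in>space M \<Longrightarrow> \<bar>r x y\<bar> \<le> Br"
  using r_nn r_le by fastforce

lemma Br_nn: "0 \<le> Br"
  using r_nn r_le not_empty by (meson order_trans ex_in_conv)

definition w where "w u = (\<integral>y. r u y * v y \<partial>M)"

lemma w_meas: "w \<in> borel_measurable M"
proof -
  have "(\<lambda>p. r (fst p) (snd p) * v (snd p)) \<in> borel_measurable (M \<Otimes>\<^sub>M M)"
    using meas2[OF r_meas, of fst "M \<Otimes>\<^sub>M M" snd] v_meas by measurable
  hence "(\<lambda>(u,y). r u y * v y) \<in> borel_measurable (M \<Otimes>\<^sub>M M)"
    by (simp add: case_prod_beta')
  thus ?thesis unfolding w_def by (rule borel_measurable_lebesgue_integral)
qed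

lemma int_rv: "u\<in>space M \<Longrightarrow> integrable M (\<lambda>y. r u y * v y)"
  apply (rule bint[where B="Br*Bm"])
  using r_sec v_meas apply measurable
  by (simp add: abs_mult) (intro mult_mono, auto simp: r_abs v_le Br_nn)

lemma int_r: "u\<in>space M \<Longrightarrow> integrable M (\<lambda>y. r u y)"
  by (rule bint[where B="Br"]) (auto simp: r_sec r_abs)

definition wlow where "wlow = \<rho>0 * vlow"

lemma wlow_pos: "0 < wlow" unfolding wlow_def using rho_pos vlow_pos by simp

lemma w_low: "u\<in>space M \<Longrightarrow> wlow \<le> w u"
proof -
  assume u: "u\<in>space M"
  have "wlow \<le> (\<integral>y. r u y \<partial>M) * vlow" unfolding wlow_def
    using rho[OF u] vlow_pos by (intro mult_right_mono) auto
  also have "\<dots> = (\<integral>y. r u y * vlow \<partial>M)" by simp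
  also have "\<dots> \<le> w u" unfolding w_def
    using int_r[OF u] int_rv[OF u]
    by (intro integral_mono) (auto intro!: mult_left_mono v_low r_nn u)
  finally show ?thesis .
qed

lemma w_le: "u\<in>space M \<Longrightarrow> w u \<le> Br * Bm"
  unfolding w_def using int_rv
  by (intro int_le_const) (auto intro!: mult_mono simp: Br_nn r_le v_le
      order_trans[OF abs_ge_self v_le] v_pos less_imp_le)

lemma rr_meas: "x \<in> space M \<Longrightarrow> (\<lambda>p. r x (fst p) * r (fst p) (snd p)) \<in> borel_measurable (M \<Otimes>\<^sub>M M)"
  by (intro borel_measurable_times meas2[OF r_meas]) auto

lemma rr_int_meas: "x \<in> space M \<Longrightarrow> (\<lambda>y. (\<integral>u. r x u * r u y \<partial>M)) \<in> borel_measurable M"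
proof -
  assume x: "x \<in> space M"
  have "(\<lambda>p. r x (snd p) * r (snd p) (fst p)) \<in> borel_measurable (M \<Otimes>\<^sub>M M)"
    using x by (intro borel_measurable_times meas2[OF r_meas]) auto
  hence "(\<lambda>(y,u). r x u * r u y) \<in> borel_measurable (M \<Otimes>\<^sub>M M)"
    by (simp add: case_prod_beta')
  thus ?thesis by (rule borel_measurable_lebesgue_integral)
qed

lemma rr_bd: "x \<in> space M \<Longrightarrow> y \<in> space M \<Longrightarrow> \<bar>\<integral>u. r x u * r u y \<partial>M\<bar> \<le> Br * Br"
proof -
  assume x: "x \<in> space M" and y: "y \<in> space M"
  have i: "integrable M (\<lambda>u. r x u * r u y)"
    apply (rule bint[where B="Br*Br"])
    using x y apply (intro borel_measurable_times meas2[OF r_meas]; simp)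
    by (simp add: abs_mult x y) (intro mult_mono, auto simp: x y r_abs Br_nn)
  have "0 \<le> (\<integral>u. r x u * r u y \<partial>M)"
    by (rule integral_nonneg_AE) (auto intro!: AE_I2 mult_nonneg_nonneg r_nn x y)
  moreover have "(\<integral>u. r x u * r u y \<partial>M) \<le> Br * Br"
    using i by (rule int_le_const) (auto intro!: mult_mono r_le r_nn x y Br_nn)
  ultimately show ?thesis by simp
qed

lemma Sv_ge: "x\<in>space M \<Longrightarrow> (\<integral>u. r x u * w u \<partial>M) \<le> (\<integral>y. s x y * v y \<partial>M)"
proof -
  assume x: "x\<in>space M"
  have e1: "(\<integral>u. r x u * w u \<partial>M) = (\<integral>u. (\<integral>y. r x u * r u y * v y \<partial>M) \<partial>M)"
    unfolding w_def by (simp add: mult.assoc)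
  have m: "(\<lambda>(u,y). r x u * r u y * v y) \<in> borel_measurable (M \<Otimes>\<^sub>M M)"
  proof -
    have "(\<lambda>p. r x (fst p) * r (fst p) (snd p) * v (snd p)) \<in> borel_measurable (M \<Otimes>\<^sub>M M)"
      by (rule borel_measurable_times[OF rr_meas[OF x] measurable_compose[OF measurable_snd v_meas]])
    thus ?thesis by (simp add: case_prod_beta')
  qed
  have e2: "(\<integral>u. (\<integral>y. r x u * r u y * v y \<partial>M) \<partial>M) = (\<integral>y. (\<integral>u. r x u * r u y * v y \<partial>M) \<partial>M)"
    apply (rule fubini_swap[where B="Br*Br*Bm", OF m])
    by (simp add: abs_mult x) (intro mult_mono, auto simp: x r_abs v_le Br_nn)
  have e3: "(\<integral>y. (\<integral>u. r x u * r u y * v y \<partial>M) \<partial>M) = (\<integral>y. (\<integral>u. r x u * r u y \<partial>M) * v y \<partial>M)"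
    by simp
  have "(\<integral>y. (\<integral>u. r x u * r u y \<partial>M) * v y \<partial>M) \<le> (\<integral>y. s x y * v y \<partial>M)"
  proof (rule integral_mono)
    show "integrable M (\<lambda>y. (\<integral>u. r x u * r u y \<partial>M) * v y)"
      apply (rule bint[where B="Br*Br*Bm"])
      using rr_int_meas[OF x] v_meas apply measurable
      by (simp add: abs_mult) (intro mult_mono, auto simp: x rr_bd v_le Br_nn)
    show "integrable M (\<lambda>y. s x y * v y)" by (rule int_sv[OF x])
    show "\<And>y. y \<in> space M \<Longrightarrow> (\<integral>u. r x u * r u y \<partial>M) * v y \<le> s x y * v y"
      using r_s x v_pos by (intro mult_right_mono) (auto simp: less_imp_le)
  qed
  thus ?thesis using e1 e2 e3 by simp
qed

definition A where "A x = (\<integral>u. r x u * w u \<partial>M)"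
definition G where "G x = (\<integral>u. r x u / w u \<partial>M)"

lemma int_rw: "x\<in>space M \<Longrightarrow> integrable M (\<lambda>u. r x u * w u)"
  apply (rule bint[where B="Br*(Br*Bm)"])
  using r_sec w_meas apply measurable
  by (simp add: abs_mult) (intro mult_mono, auto simp: r_abs w_le Br_nn
      abs_of_nonneg order_trans[OF less_imp_le[OF wlow_pos] w_low])

lemma int_rdw: "x\<in>space M \<Longrightarrow> integrable M (\<lambda>u. r x u / w u)"
proof (rule bint[where B="Br/wlow"])
  assume x: "x\<in>space M"
  show "(\<lambda>u. r x u / w u) \<in> borel_measurable M" using r_sec[OF x] w_meas by measurable
  fix u assume u: "u\<in>space M"
  have w: "wlow \<le> w u" "0 < wlow" using w_low[OF u] wlow_pos by auto
  have "\<bar>r x u / w u\<bar> = r x u / w u" using r_nn[OF x u] w by simp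
  also have "\<dots> \<le> Br / w u" using r_le[OF x u] w by (simp add: divide_right_mono)
  also have "\<dots> \<le> Br / wlow" using w Br_nn by (intro divide_left_mono) auto
  finally show "norm (r x u / w u) \<le> Br / wlow" by simp
qed

lemma A_pos: "x\<in>space M \<Longrightarrow> 0 < A x"
proof -
  assume x: "x\<in>space M"
  have "0 < \<rho>0 * wlow" using rho_pos wlow_pos by simp
  also have "\<dots> \<le> (\<integral>u. r x u \<partial>M) * wlow" using rho[OF x] wlow_pos by (intro mult_right_mono) auto
  also have "\<dots> = (\<integral>u. r x u * wlow \<partial>M)" by simp
  also have "\<dots> \<le> A x" unfolding A_def using int_r[OF x] int_rw[OF x]
    by (intro integral_mono) (auto intro!: mult_left_mono w_low r_nn x)
  finally show ?thesis .
qed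

lemma CS: "x\<in>space M \<Longrightarrow> (\<integral>u. r x u \<partial>M)\<^sup>2 \<le> A x * G x"
proof -
  assume x: "x\<in>space M"
  define \<rho> where "\<rho> = (\<integral>u. r x u \<partial>M)"
  have \<rho>: "0 < \<rho>" unfolding \<rho>_def using rho[OF x] rho_pos by simp
  define l where "l = \<rho> / A x"
  have l: "0 < l" unfolding l_def using \<rho> A_pos[OF x] by simp
  have pt: "2 * r x u \<le> l * (r x u * w u) + (r x u / w u) / l" if u: "u \<in> space M" for u
  proof -
    have wp: "0 < w u" using w_low[OF u] wlow_pos by simp
    define t where "t = l * w u"
    have t: "0 < t" unfolding t_def using l wp by simp
    have "0 \<le> r x u * ((t - 1)\<^sup>2 / t)" using r_nn[OF x u] t by simp
    moreover have "r x u * ((t - 1)\<^sup>2 / t) = l * (r x u * w u) + (r x u / w u) / l - 2 * r x u"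
      using t wp l unfolding t_def by (simp add: field_simps power2_eq_square)
    ultimately show ?thesis by simp
  qed
  have "2 * \<rho> = (\<integral>u. 2 * r x u \<partial>M)" unfolding \<rho>_def by simp
  also have "\<dots> \<le> (\<integral>u. l * (r x u * w u) + (r x u / w u) / l \<partial>M)"
  proof (rule integral_mono)
    show "integrable M (\<lambda>u. 2 * r x u)" using int_r[OF x] by simp
    show "integrable M (\<lambda>u. l * (r x u * w u) + (r x u / w u) / l)"
      using int_rw[OF x] int_rdw[OF x] by (intro Bochner_Integration.integrable_add Bochner_Integration.integrable_mult_right Bochner_Integration.integrable_divide_zero)
  qed (rule pt)
  also have "\<dots> = (\<integral>u. l * (r x u * w u) \<partial>M) + (\<integral>u. (r x u / w u) / l \<partial>M)"
    using int_rw[OF x] int_rdw[OF x]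
    by (intro Bochner_Integration.integral_add Bochner_Integration.integrable_mult_right Bochner_Integration.integrable_divide_zero)
  also have "\<dots> = l * A x + G x / l"
    unfolding A_def G_def by (simp only: integral_mult_right_zero integral_divide_zero)
  also have "\<dots> = \<rho> + G x * A x / \<rho>" unfolding l_def using \<rho> A_pos[OF x] by simp
  finally have "\<rho> \<le> G x * A x / \<rho>" by simp
  hence "\<rho> * \<rho> \<le> G x * A x" using \<rho> by (simp add: field_simps)
  thus ?thesis unfolding \<rho>_def by (simp add: power2_eq_square mult.commute)
qed

lemma G_nn: "x\<in>space M \<Longrightarrow> 0 \<le> G x"
  unfolding G_def
  by (rule integral_nonneg_AE) (auto intro!: AE_I2 divide_nonneg_nonneg r_nn
      order_trans[OF less_imp_le[OF wlow_pos] w_low])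

lemma mm_sq_le: "x\<in>space M \<Longrightarrow> (cmod (mm x))\<^sup>2 \<le> v x * G x / \<rho>0\<^sup>2"
proof -
  assume x: "x\<in>space M"
  define \<rho> where "\<rho> = (\<integral>u. r x u \<partial>M)"
  have \<rho>: "\<rho>0 \<le> \<rho>" unfolding \<rho>_def using rho[OF x] by simp
  have Ap: "0 < A x" by (rule A_pos[OF x])
  have "(cmod (mm x))\<^sup>2 = v x / (Im z + (\<integral>y. s x y * v y \<partial>M))" by (rule mm_sq[OF x])
  also have "\<dots> \<le> v x / A x"
    using Sv_ge[OF x] Ap eta v_pos[OF x] unfolding A_def[symmetric]
    by (intro divide_left_mono) auto
  also have "\<dots> \<le> v x * G x / \<rho>\<^sup>2"
  proof -
    have "\<rho>\<^sup>2 \<le> A x * G x" using CS[OF x] unfolding \<rho>_def .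
    moreover have "0 < \<rho>\<^sup>2" using \<rho> rho_pos by simp
    ultimately show ?thesis using Ap v_pos[OF x] by (simp add: field_simps)
  qed
  also have "\<dots> \<le> v x * G x / \<rho>0\<^sup>2"
    using \<rho> rho_pos v_pos[OF x] G_nn[OF x]
    by (intro divide_left_mono mult_nonneg_nonneg power_mono) auto
  finally show ?thesis .
qed

lemma G_meas: "G \<in> borel_measurable M"
proof -
  have "(\<lambda>p. r (fst p) (snd p) / w (snd p)) \<in> borel_measurable (M \<Otimes>\<^sub>M M)"
    by (rule borel_measurable_divide[OF meas2[OF r_meas] measurable_compose[OF measurable_snd w_meas]]) auto
  hence "(\<lambda>(x,u). r x u / w u) \<in> borel_measurable (M \<Otimes>\<^sub>M M)"
    by (simp add: case_prod_beta')
  thus ?thesis unfolding G_def by (rule borel_measurable_lebesgue_integral)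
qed

lemma G_le: "x\<in>space M \<Longrightarrow> G x \<le> Br / wlow"
  unfolding G_def
proof (rule int_le_const[OF int_rdw])
  fix u assume x: "x\<in>space M" and u: "u\<in>space M"
  show "r x u / w u \<le> Br / wlow"
    using r_nn[OF x u] r_le[OF x u] w_low[OF u] wlow_pos Br_nn
    by (meson divide_mono less_le_trans)
qed

lemma vG_int: "(\<integral>x. v x * G x \<partial>M) = 1"
proof -
  have m: "(\<lambda>(x,u). v x * (r x u / w u)) \<in> borel_measurable (M \<Otimes>\<^sub>M M)"
  proof -
    have "(\<lambda>p. v (fst p) * (r (fst p) (snd p) / w (snd p))) \<in> borel_measurable (M \<Otimes>\<^sub>M M)"
      by (rule borel_measurable_times[OF measurable_compose[OF measurable_fst v_meas]
          borel_measurable_divide[OF meas2[OF r_meas] measurable_compose[OF measurable_snd w_meas]]]) auto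
    thus ?thesis by (simp add: case_prod_beta')
  qed
  have "(\<integral>x. v x * G x \<partial>M) = (\<integral>x. (\<integral>u. v x * (r x u / w u) \<partial>M) \<partial>M)"
    unfolding G_def integral_mult_right_zero by (rule refl)
  also have "\<dots> = (\<integral>u. (\<integral>x. v x * (r x u / w u) \<partial>M) \<partial>M)"
  proof (rule fubini_swap[OF m, where B="Bm * (Br / wlow)"])
    fix x u assume x: "x\<in>space M" and u: "u\<in>space M"
    have "\<bar>r x u / w u\<bar> \<le> Br / wlow"
      using int_rdw[OF x] r_nn[OF x u] r_le[OF x u] w_low[OF u] wlow_pos Br_nn
      by (simp add: abs_of_nonneg) (meson divide_mono less_le_trans order_trans)
    hence "\<bar>v x\<bar> * \<bar>r x u / w u\<bar> \<le> Bm * (Br / wlow)"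
      by (intro mult_mono) (auto simp: v_le x Bm_nn)
    thus "\<bar>v x * (r x u / w u)\<bar> \<le> Bm * (Br / wlow)"
      by (simp only: abs_mult)
  qed
  also have "\<dots> = (\<integral>u. 1 \<partial>M)"
  proof (rule Bochner_Integration.integral_cong[OF refl])
    fix u assume u: "u\<in>space M"
    have "(\<integral>x. v x * (r x u / w u) \<partial>M) = (\<integral>x. r u x * v x \<partial>M) / w u"
    proof -
      have "(\<integral>x. r u x * v x \<partial>M) = (\<integral>x. v x * r x u \<partial>M)"
        using r_sym u by (intro Bochner_Integration.integral_cong) (auto simp: mult.commute)
      moreover have "(\<integral>x. v x * (r x u / w u) \<partial>M) = (\<integral>x. v x * r x u / w u \<partial>M)"
        by (intro Bochner_Integration.integral_cong) auto
      moreover have "(\<integral>x. v x * r x u / w u \<partial>M) = (\<integral>x. v x * r x u \<partial>M) / w u"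
        by (rule integral_divide_zero)
      ultimately show ?thesis by simp
    qed
    also have "\<dots> = 1" unfolding w_def[symmetric] using w_low[OF u] wlow_pos by simp
    finally show "(\<integral>x. v x * (r x u / w u) \<partial>M) = 1" .
  qed
  finally show ?thesis by (simp add: prob_space)
qed

lemma L2: "(\<integral>x. (cmod (mm x))\<^sup>2 \<partial>M) \<le> 1 / \<rho>0\<^sup>2"
proof -
  have "(\<integral>x. (cmod (mm x))\<^sup>2 \<partial>M) \<le> (\<integral>x. v x * G x / \<rho>0\<^sup>2 \<partial>M)"
  proof (rule integral_mono)
    show "integrable M (\<lambda>x. (cmod (mm x))\<^sup>2)"
      apply (rule bint[where B="Bm\<^sup>2"]) using mm_meas apply measurable
      by (simp, intro power_mono, auto simp: mm_le)
    show "integrable M (\<lambda>x. v x * G x / \<rho>0\<^sup>2)"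
    proof (rule bint[where B="Bm * (Br / wlow) / \<rho>0\<^sup>2"])
      show "(\<lambda>x. v x * G x / \<rho>0\<^sup>2) \<in> borel_measurable M" using v_meas G_meas by measurable
      fix x assume x: "x \<in> space M"
      have "\<bar>v x * G x\<bar> \<le> Bm * (Br / wlow)"
        using v_le[OF x] G_le[OF x] G_nn[OF x] unfolding abs_mult by (intro mult_mono) auto
      hence "\<bar>v x * G x\<bar> / \<rho>0\<^sup>2 \<le> Bm * (Br / wlow) / \<rho>0\<^sup>2"
        by (intro divide_right_mono) auto
      moreover have "norm (v x * G x / \<rho>0\<^sup>2) = \<bar>v x * G x\<bar> / \<rho>0\<^sup>2"
        by (simp add: abs_divide)
      ultimately show "norm (v x * G x / \<rho>0\<^sup>2) \<le> Bm * (Br / wlow) / \<rho>0\<^sup>2" by linarith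
    qed
  qed (rule mm_sq_le)
  also have "\<dots> = 1 / \<rho>0\<^sup>2" using vG_int by simp
  finally show ?thesis .
qed

end

theorem mainTheorem4:
  fixes M :: "'a measure" and a :: "'a \<Rightarrow> real" and s :: "'a \<Rightarrow> 'a \<Rightarrow> real"
    and m :: "complex \<Rightarrow> 'a \<Rightarrow> complex"
  assumes prob: "prob_space M"
    and a_meas: "a \<in> borel_measurable M" and a_bdd: "bounded (a ` space M)"
    and s_meas: "(\<lambda>(x, y). s x y) \<in> borel_measurable (M \<Otimes>\<^sub>M M)"
    and s_bdd: "bounded ((\<lambda>(x, y). s x y) ` (space M \<times> space M))"
    and s_nonneg: "\<And>x y. x \<in> space M \<Longrightarrow> y \<in> space M \<Longrightarrow> 0 \<le> s x y"
    and s_sym: "\<And>x y. x \<in> space M \<Longrightarrow> y \<in> space M \<Longrightarrow> s x y = s y x"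
    and m_bmeas: "\<And>z. 0 < Im z \<Longrightarrow> m z \<in> bmeas M"
    and m_H: "\<And>z x. 0 < Im z \<Longrightarrow> x \<in> space M \<Longrightarrow> 0 < Im (m z x)"
    and m_eq: "\<And>z x. 0 < Im z \<Longrightarrow> x \<in> space M \<Longrightarrow>
                 - 1 / m z x = z + complex_of_real (a x) + Sop M s (m z) x"
    and A: "\<exists>r :: 'a \<Rightarrow> 'a \<Rightarrow> real.
              (\<lambda>(x, y). r x y) \<in> borel_measurable (M \<Otimes>\<^sub>M M)
            \<and> bounded ((\<lambda>(x, y). r x y) ` (space M \<times> space M))
            \<and> (\<forall>x\<in>space M. \<forall>y\<in>space M. 0 \<le> r x y \<and> r x y = r y x)
            \<and> (\<forall>x\<in>space M. \<forall>y\<in>space M. (LINT u|M. r x u * r u y) \<le> s x y)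
            \<and> (INF x\<in>space M. (LINT y|M. r x y)) > 0"
    and B: "\<exists>K::nat. 1 \<le> K \<and> (INF p\<in>space M \<times> space M. kern_pow M s K (fst p) (snd p)) > 0"
    and C: "filterlim (\<lambda>\<epsilon>::real. INF x\<in>space M. (LINT y|M.
                1 / (\<epsilon> + (a x - a y)\<^sup>2 + (LINT u|M. (s x u - s y u)\<^sup>2))))
              at_top (at_right 0)"
  shows "\<exists>c>0. \<forall>z x y. 0 < Im z \<and> cmod z \<le> 2 * kappa M a s
           \<and> x \<in> space M \<and> y \<in> space M \<longrightarrow>
             1 / c \<le> cmod (m z x) \<and> cmod (m z x) \<le> c
             \<and> Im (m z x) \<le> c * Im (m z y) \<and> Im (m z y) \<le> c * Im (m z x)"
proof -
  interpret P: prob_space M by (rule prob)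
  obtain Bs where Bs: "\<And>x y. x\<in>space M \<Longrightarrow> y\<in>space M \<Longrightarrow> \<bar>s x y\<bar> \<le> Bs"
    using s_bdd unfolding bounded_real by fastforce
  obtain Ba where Ba: "\<And>x. x\<in>space M \<Longrightarrow> \<bar>a x\<bar> \<le> Ba"
    using a_bdd unfolding bounded_real by fastforce
  interpret Q: qve M s a Bs Ba
    by unfold_locales (use s_meas s_nonneg s_sym a_meas Ba Bs in \<open>auto simp: abs_le_iff\<close>)
  obtain r where rm: "(\<lambda>(x, y). r x y) \<in> borel_measurable (M \<Otimes>\<^sub>M M)"
    and rb: "bounded ((\<lambda>(x, y). r x y) ` (space M \<times> space M))"
    and rs: "\<forall>x\<in>space M. \<forall>y\<in>space M. 0 \<le> r x y \<and> r x y = r y x"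
    and rrs: "\<forall>x\<in>space M. \<forall>y\<in>space M. (LINT u|M. r x u * r u y) \<le> s x y"
    and rinf: "(INF x\<in>space M. (LINT y|M. r x y)) > 0"
    using A by blast
  obtain Br where Br: "\<And>x y. x\<in>space M \<Longrightarrow> y\<in>space M \<Longrightarrow> \<bar>r x y\<bar> \<le> Br"
    using rb unfolding bounded_real by fastforce
  define \<rho>0 where "\<rho>0 = (INF x\<in>space M. (LINT y|M. r x y))"
  have rho: "\<rho>0 \<le> (LINT y|M. r x y)" if x: "x \<in> space M" for x
    unfolding \<rho>0_def
  proof (rule cINF_lower[OF _ x])
    show "bdd_below ((\<lambda>x. LINT y|M. r x y) ` space M)"
      using rs by (intro bdd_belowI[where m=0]) (auto intro!: integral_nonneg_AE AE_I2)
  qed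
  obtain K \<delta> where K: "1 \<le> K" and dl: "0 < \<delta>"
    and kd: "\<And>x y. x\<in>space M \<Longrightarrow> y\<in>space M \<Longrightarrow> \<delta> \<le> kern_pow M s K x y"
  proof -
    obtain K where K: "1 \<le> K" and kinf: "(INF p\<in>space M \<times> space M. kern_pow M s K (fst p) (snd p)) > 0"
      using B by blast
    have KK: "Suc (K - 1) = K" using K by simp
    have kp: "\<forall>x\<in>space M. \<forall>y\<in>space M. 0 \<le> kern_pow M s K x y"
      using Q.ki_props[of "K - 1"] KK unfolding kern_pow_def by simp
    show thesis
    proof (rule that[OF K kinf])
      fix x y assume x: "x\<in>space M" and y: "y\<in>space M"
      have "(INF p\<in>space M \<times> space M. kern_pow M s K (fst p) (snd p)) \<le> kern_pow M s K (fst (x,y)) (snd (x,y))"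
        by (rule cINF_lower) (use kp x y in \<open>auto intro!: bdd_belowI[where m=0]\<close>)
      thus "(INF p\<in>space M \<times> space M. kern_pow M s K (fst p) (snd p)) \<le> kern_pow M s K x y" by simp
    qed
  qed
  define L2b where "L2b = 1 / \<rho>0\<^sup>2"
  define T where "T = 3 * max 1 L2b * (L2b + 1)"
  obtain \<epsilon>0 where e0: "0 < \<epsilon>0" and Cc: "\<And>\<epsilon> x. 0 < \<epsilon> \<Longrightarrow> \<epsilon> < \<epsilon>0 \<Longrightarrow> x\<in>space M \<Longrightarrow>
      T \<le> (\<integral>y. 1 / (\<epsilon> + (a x - a y)\<^sup>2 + (\<integral>u. (s x u - s y u)\<^sup>2 \<partial>M)) \<partial>M)"
  proof -
    have "eventually (\<lambda>\<epsilon>. T \<le> (INF x\<in>space M. (LINT y|M.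
                1 / (\<epsilon> + (a x - a y)\<^sup>2 + (LINT u|M. (s x u - s y u)\<^sup>2))))) (at_right 0)"
      using C unfolding filterlim_at_top by blast
    then obtain b where b: "0 < b" and bb: "\<And>\<epsilon>. 0 < \<epsilon> \<Longrightarrow> \<epsilon> < b \<Longrightarrow> T \<le> (INF x\<in>space M. (LINT y|M.
                1 / (\<epsilon> + (a x - a y)\<^sup>2 + (LINT u|M. (s x u - s y u)\<^sup>2))))"
      unfolding eventually_at_right_field by blast
    show thesis
    proof (rule that[OF b])
      fix \<epsilon> x assume e: "0 < \<epsilon>" "\<epsilon> < b" and x: "x\<in>space M"
      have "(INF x\<in>space M. (LINT y|M. 1 / (\<epsilon> + (a x - a y)\<^sup>2 + (LINT u|M. (s x u - s y u)\<^sup>2))))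
          \<le> (LINT y|M. 1 / (\<epsilon> + (a x - a y)\<^sup>2 + (LINT u|M. (s x u - s y u)\<^sup>2)))"
      proof (rule cINF_lower[OF _ x])
        have "0 \<le> (LINT y|M. 1 / (\<epsilon> + (a x - a y)\<^sup>2 + (LINT u|M. (s x u - s y u)\<^sup>2)))" for x
        proof (rule integral_nonneg_AE, rule AE_I2)
          fix y
          have "0 \<le> (LINT u|M. (s x u - s y u)\<^sup>2)" by (rule integral_nonneg_AE) auto
          thus "0 \<le> 1 / (\<epsilon> + (a x - a y)\<^sup>2 + (LINT u|M. (s x u - s y u)\<^sup>2))" using e by simp
        qed
        thus "bdd_below ((\<lambda>x. LINT y|M. 1 / (\<epsilon> + (a x - a y)\<^sup>2 + (LINT u|M. (s x u - s y u)\<^sup>2))) ` space M)"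
          by (intro bdd_belowI[where m=0]) auto
      qed
      thus "T \<le> (\<integral>y. 1 / (\<epsilon> + (a x - a y)\<^sup>2 + (\<integral>u. (s x u - s y u)\<^sup>2 \<partial>M)) \<partial>M)"
        using bb[OF e] by linarith
    qed
  qed
  define Mup where "Mup = 1 / sqrt (max 1 L2b * \<epsilon>0)"
  define Dl where "Dl = \<bar>2 * kappa M a s\<bar> + \<bar>Ba\<bar> + Bs * Mup + 1"
  define clo where "clo = (1 / Dl)\<^sup>2"
  define chi where "chi = Mup\<^sup>2"
  define R where "R = chi * (1 / clo + Bs / (clo ^ K * \<delta>))"
  have Bs0: "0 \<le> Bs" by (rule Q.Bs_nn)
  have Mup0: "0 < Mup" unfolding Mup_def using e0 by simp
  have Dl: "0 < Dl"
  proof -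
    have "0 \<le> Bs * Mup" using Bs0 Mup0 by simp
    thus ?thesis unfolding Dl_def by (smt (verit) abs_ge_zero)
  qed
  have clo: "0 < clo" unfolding clo_def using Dl by simp
  have main: "1 / Dl \<le> cmod (m z x) \<and> cmod (m z x) \<le> Mup \<and> Im (m z x) \<le> R * Im (m z y)"
    if z: "0 < Im z" and zk: "cmod z \<le> 2 * kappa M a s" and x: "x \<in> space M" and y: "y \<in> space M"
    for z x y
  proof -
    obtain Bm where Bm: "\<And>x. x\<in>space M \<Longrightarrow> cmod (m z x) \<le> Bm"
      using m_bmeas[OF z] unfolding bmeas_def bounded_iff by fastforce
    interpret Z: qvr M s a Bs Ba z "m z" Bm r Br \<rho>0
    proof unfold_locales
      show "0 < Im z" by (rule z)
      show "m z \<in> borel_measurable M" using m_bmeas[OF z] unfolding bmeas_def by simp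
      show "\<And>x. x \<in> space M \<Longrightarrow> cmod (m z x) \<le> Bm" by (rule Bm)
      show "\<And>x. x \<in> space M \<Longrightarrow> 0 < Im (m z x)" using m_H[OF z] .
      show "\<And>x. x \<in> space M \<Longrightarrow> - 1 / m z x = z + of_real (a x) + (\<integral>y. of_real (s x y) * m z y \<partial>M)"
        using m_eq[OF z] unfolding Sop_def .
      show "(\<lambda>(x, y). r x y) \<in> borel_measurable (M \<Otimes>\<^sub>M M)" by (rule rm)
      show "\<And>x y. x \<in> space M \<Longrightarrow> y \<in> space M \<Longrightarrow> 0 \<le> r x y" using rs by blast
      show "\<And>x y. x \<in> space M \<Longrightarrow> y \<in> space M \<Longrightarrow> r x y \<le> Br" using Br abs_le_iff by blast
      show "\<And>x y. x \<in> space M \<Longrightarrow> y \<in> space M \<Longrightarrow> r x y = r y x" using rs by blast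
      show "\<And>x y. x \<in> space M \<Longrightarrow> y \<in> space M \<Longrightarrow> (\<integral>u. r x u * r u y \<partial>M) \<le> s x y" using rrs by blast
      show "\<And>x. x \<in> space M \<Longrightarrow> \<rho>0 \<le> (\<integral>y. r x y \<partial>M)" by (rule rho)
      show "0 < \<rho>0" using rinf unfolding \<rho>0_def .
    qed
    have L: "(\<integral>u. (cmod (m z u))\<^sup>2 \<partial>M) \<le> L2b" unfolding L2b_def by (rule Z.L2)
    have up: "cmod (m z u) \<le> Mup" if u: "u \<in> space M" for u
      unfolding Mup_def by (rule Z.ubound[OF L e0 Cc[unfolded T_def] u])
    have lo: "1 / Dl \<le> cmod (m z u)" if u: "u \<in> space M" for u
    proof -
      have "cmod (1 / m z u) \<le> cmod z + Ba + Bs * Mup" by (rule Z.inv_le[OF u up])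
      also have "\<dots> \<le> Dl" unfolding Dl_def using zk by simp
      finally have "1 / cmod (m z u) \<le> Dl" by (simp add: norm_divide)
      thus ?thesis using Z.mm_nz[OF u] Dl by (simp add: field_simps)
    qed
    have lo2: "clo \<le> (cmod (m z u))\<^sup>2" if u: "u \<in> space M" for u
      unfolding clo_def using lo[OF u] Dl by (intro power_mono) auto
    have hi2: "(cmod (m z u))\<^sup>2 \<le> chi" if u: "u \<in> space M" for u
      unfolding chi_def using up[OF u] by (intro power_mono) auto
    have "Z.v x \<le> R * Z.v y"
      unfolding R_def by (rule Z.v_compare[OF clo lo2 hi2 dl K kd x y])
    thus ?thesis using lo[OF x] up[OF x] unfolding Z.v_def by simp
  qed
  define c where "c = max (max Mup Dl) (max R 1)"
  have c0: "0 < c" unfolding c_def by simp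
  show ?thesis
  proof (intro exI[of _ c] conjI c0 allI impI)
    fix z x y assume h: "0 < Im z \<and> cmod z \<le> 2 * kappa M a s \<and> x \<in> space M \<and> y \<in> space M"
    have mx: "1 / Dl \<le> cmod (m z x) \<and> cmod (m z x) \<le> Mup \<and> Im (m z x) \<le> R * Im (m z y)"
      using main h by blast
    have my: "Im (m z y) \<le> R * Im (m z x)" using main h by blast
    have px: "0 < Im (m z x)" "0 < Im (m z y)" using m_H h by auto
    have "1 / c \<le> 1 / Dl" using Dl unfolding c_def by (intro divide_left_mono) auto
    thus "1 / c \<le> cmod (m z x)" using mx by linarith
    show "cmod (m z x) \<le> c" using mx unfolding c_def by linarith
    have "R * Im (m z y) \<le> c * Im (m z y)" using px unfolding c_def by (intro mult_right_mono) auto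
    thus "Im (m z x) \<le> c * Im (m z y)" using mx by linarith
    have "R * Im (m z x) \<le> c * Im (m z x)" using px unfolding c_def by (intro mult_right_mono) auto
    thus "Im (m z y) \<le> c * Im (m z x)" using my by linarith
  qed
qed

end
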